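(* Let $\gamma\in[0,1]$. Let $\Lambda:\mathbb{R}\to\mathbb{R}$ be $C^2$, monotonically increasing and bi-asymptotically constant with $\lim_{t\to\pm\infty}\Lambda(t)=\lambda^\pm$, and for $r>0$ put $\Lambda_r(\tau)=\Lambda(r\tau)$. Let $V_p(\Lambda_r(\tau))>0$ and $c(\Lambda_r(\tau))>0$ be parameter functions, set $V_p^-=\lim_{\tau\to-\infty}V_p(\Lambda_r(\tau))>0$, and consider the nonautonomous system $$\frac{dv}{d\tau}=\frac{(1-\gamma)V_p(\Lambda_r(\tau))^2}{(V_p^-)^2}m^3-(1-\gamma m^3)v^2,\qquad \frac{dm}{d\tau}=(1-m)v-c(\Lambda_r(\tau))m .$$ Assume the frozen system (parameters fixed at $\Lambda_r=\lambda$) has three equilibria at $\lambda=\lambda^-$, namely $\mathcal{O}=(0,0)$, a saddle $\mathcal{U}^-$ and a stable storm state $\mathcal{S}^-$, and three equilibria at $\lambda=\lambda^+$, namely $\mathcal{O}$, $\mathcal{U}^+$, $\mathcal{S}^+$. Assume there exist continuous paths $(\tau,p_u(\tau))$ and $(\tau,p_s(\tau))$, where for each $\tau$, $p_u(\tau)$ is the unstable (saddle) storm equilibrium and $p_s(\tau)$ the stable storm equilibrium of the frozen system at $\Lambda_r(\tau)$, with $p_u(\tau)\ne p_s(\tau)$ for all $\tau$, $p_u(\tau)\to\mathcal{U}^\pm$ and $p_s(\tau)\to\mathcal{S}^\pm$ as $\tau\to\pm\infty$. If either $\tau\mapsto V_p(\Lambda_r(\tau))$ or $\tau\mapsto c(\Lambda_r(\tau))$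 is nonincreasing, then there is no rate-induced tipping away from the stable storm state $\mathcal{S}^-$ to the non-storm state $\mathcal{O}$: the solution that converges to $\mathcal{S}^-$ as $\tau\to-\infty$ does not converge to $\mathcal{O}$ as $\tau\to\infty$.
   Context: For frozen parameter values, the positive equilibria are the points $(v,v/(v+c))$ with $v>0$ a zero of $p(v,V_p,c)=(1-\gamma)(V_p/V_p^-)^2v+\gamma v^3-(v+c)^3$; $\mathcal{O}=(0,0)$ is always a stable equilibrium (non-storm state). Rate-induced tipping away from $\mathcal{S}^-$ to $\mathcal{O}$ means that for some rate $r>0$ the solution of the nonautonomous system limiting to $\mathcal{S}^-$ as $\tau\to-\infty$ fails to end-point track the stable path $p_s$ and instead converges to $\mathcal{O}$ as $\tau\to\infty$. *)

theory Defs
  imports "HOL-Analysis.Analysis"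
begin

text \<open>Frozen vector field of the storm model with parameters
  A = V_p / V_p^- and C = c:
  dv/dt = (1-gamma) A^2 m^3 - (1 - gamma m^3) v^2,  dm/dt = (1-m) v - C m.\<close>
definition storm_field :: "real \<Rightarrow> real \<Rightarrow> real \<Rightarrow> real \<times> real \<Rightarrow> real \<times> real" where
  "storm_field \<gamma> A C x = (case x of (v, m) \<Rightarrow>
     ((1 - \<gamma>) * A\<^sup>2 * m ^ 3 - (1 - \<gamma> * m ^ 3) * v\<^sup>2, (1 - m) * v - C * m))"

definition jac11 :: "real \<Rightarrow> real \<Rightarrow> real \<Rightarrow> real \<times> real \<Rightarrow> real" where
  "jac11 \<gamma> A C x = (case x of (v, m) \<Rightarrow> - 2 * (1 - \<gamma> * m ^ 3) * v)"
definition jac12 :: "real \<Rightarrow> real \<Rightarrow> real \<Rightarrow> real \<times> real \<Rightarrow> real" where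
  "jac12 \<gamma> A C x = (case x of (v, m) \<Rightarrow> 3 * (1 - \<gamma>) * A\<^sup>2 * m\<^sup>2 + 3 * \<gamma> * m\<^sup>2 * v\<^sup>2)"
definition jac21 :: "real \<Rightarrow> real \<Rightarrow> real \<Rightarrow> real \<times> real \<Rightarrow> real" where
  "jac21 \<gamma> A C x = (case x of (v, m) \<Rightarrow> 1 - m)"
definition jac22 :: "real \<Rightarrow> real \<Rightarrow> real \<Rightarrow> real \<times> real \<Rightarrow> real" where
  "jac22 \<gamma> A C x = (case x of (v, m) \<Rightarrow> - v - C)"

definition jac_eigenvalue :: "real \<Rightarrow> real \<Rightarrow> real \<Rightarrow> real \<times> real \<Rightarrow> complex \<Rightarrow> bool" where
  "jac_eigenvalue \<gamma> A C x z \<longleftrightarrow>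
     (complex_of_real (jac11 \<gamma> A C x) - z) * (complex_of_real (jac22 \<gamma> A C x) - z)
       - complex_of_real (jac12 \<gamma> A C x) * complex_of_real (jac21 \<gamma> A C x) = 0"

definition is_equilibrium :: "real \<Rightarrow> real \<Rightarrow> real \<Rightarrow> real \<times> real \<Rightarrow> bool" where
  "is_equilibrium \<gamma> A C x \<longleftrightarrow> storm_field \<gamma> A C x = (0, 0)"

definition storm_equilibrium :: "real \<Rightarrow> real \<Rightarrow> real \<Rightarrow> real \<times> real \<Rightarrow> bool" where
  "storm_equilibrium \<gamma> A C x \<longleftrightarrow> is_equilibrium \<gamma> A C x \<and> fst x > 0"

definition saddle_eq :: "real \<Rightarrow> real \<Rightarrow> real \<Rightarrow> real \<times> real \<Rightarrow> bool" where
  "saddle_eq \<gamma> A C x \<longleftrightarrow> is_equilibrium \<gamma> A C x \<and>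
     (\<exists>\<mu>1 \<mu>2::real. \<mu>1 < 0 \<and> 0 < \<mu>2 \<and>
        jac_eigenvalue \<gamma> A C x (complex_of_real \<mu>1) \<and> jac_eigenvalue \<gamma> A C x (complex_of_real \<mu>2))"

definition stable_eq :: "real \<Rightarrow> real \<Rightarrow> real \<Rightarrow> real \<times> real \<Rightarrow> bool" where
  "stable_eq \<gamma> A C x \<longleftrightarrow> is_equilibrium \<gamma> A C x \<and>
     (\<forall>z. jac_eigenvalue \<gamma> A C x z \<longrightarrow> Re z < 0)"

definition phys_equilibria :: "real \<Rightarrow> real \<Rightarrow> real \<Rightarrow> (real \<times> real) set" where
  "phys_equilibria \<gamma> A C = {x. is_equilibrium \<gamma> A C x \<and> fst x \<ge> 0}"

definition C2_fun :: "(real \<Rightarrow> real) \<Rightarrow> bool" where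
  "C2_fun f \<longleftrightarrow> (\<exists>f' f''. (\<forall>t. (f has_real_derivative f' t) (at t)) \<and>
      (\<forall>t. (f' has_real_derivative f'' t) (at t)) \<and> continuous_on UNIV f'')"

end

theory Submission
  imports Defs
begin

definition pp :: "real \<Rightarrow> real \<Rightarrow> real \<Rightarrow> real \<Rightarrow> real" where
  "pp \<gamma> a c v = (1 - \<gamma>) * a^2 * v + \<gamma> * v^3 - (v + c)^3"

definition EE :: "real \<Rightarrow> real \<Rightarrow> real \<Rightarrow> real" where
  "EE \<gamma> c r = (r+c)^3 + 2*\<gamma> * r^3 - 3 * r * (r+c)^2"

lemma vd_fst:
  assumes "((\<lambda>t. (f t, g t)) has_vector_derivative (a,b)) (at x)"
  shows "(f has_real_derivative a) (at x)"
proof -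
  have "((\<lambda>t. fst (f t, g t)) has_derivative (\<lambda>h. fst (h *\<^sub>R (a,b)))) (at x)"
    using assms unfolding has_vector_derivative_def by (rule has_derivative_fst)
  then show ?thesis by (simp add: has_real_derivative_iff_has_vector_derivative has_vector_derivative_def)
qed

lemma vd_snd:
  assumes "((\<lambda>t. (f t, g t)) has_vector_derivative (a,b)) (at x)"
  shows "(g has_real_derivative b) (at x)"
proof -
  have "((\<lambda>t. snd (f t, g t)) has_derivative (\<lambda>h. snd (h *\<^sub>R (a,b)))) (at x)"
    using assms unfolding has_vector_derivative_def by (rule has_derivative_snd)
  then show ?thesis by (simp add: has_real_derivative_iff_has_vector_derivative has_vector_derivative_def)
qed

lemma root_of_storm:
  assumes "storm_equilibrium \<gamma> a c (v,m)" "c \<ge> 0"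
  shows "v > 0 \<and> m = v/(v+c) \<and> pp \<gamma> a c v = 0"
proof -
  from assms have v: "v > 0" and e1: "(1 - \<gamma>) * a\<^sup>2 * m ^ 3 - (1 - \<gamma> * m ^ 3) * v\<^sup>2 = 0"
    and e2: "(1 - m) * v - c * m = 0"
    by (auto simp: storm_equilibrium_def is_equilibrium_def storm_field_def)
  have vc: "v + c > 0" using v assms(2) by simp
  from e2 have "m * (v+c) = v" by (simp add: algebra_simps)
  then have m: "m = v/(v+c)" using vc by (simp add: field_simps)
  have "(1 - \<gamma>) * a\<^sup>2 * v ^ 3 - ((v+c)^3 - \<gamma> * v ^ 3) * v\<^sup>2 = 0"
  proof -
    have "(1 - \<gamma>) * a\<^sup>2 * (v/(v+c)) ^ 3 - (1 - \<gamma> * (v/(v+c)) ^ 3) * v\<^sup>2 = 0"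
      using e1 m by simp
    then have "((1 - \<gamma>) * a\<^sup>2 * (v/(v+c)) ^ 3 - (1 - \<gamma> * (v/(v+c)) ^ 3) * v\<^sup>2) * (v+c)^3 = 0"
      by simp
    moreover have "((1 - \<gamma>) * a\<^sup>2 * (v/(v+c)) ^ 3 - (1 - \<gamma> * (v/(v+c)) ^ 3) * v\<^sup>2) * (v+c)^3
       = (1 - \<gamma>) * a\<^sup>2 * v ^ 3 - ((v+c)^3 - \<gamma> * v ^ 3) * v\<^sup>2"
      using vc by (simp add: field_simps power_divide)
    ultimately show ?thesis by simp
  qed
  then have "v^2 * pp \<gamma> a c v = 0" unfolding pp_def by (simp add: algebra_simps power2_eq_square power3_eq_cube)
  then have "pp \<gamma> a c v = 0" using v by simp
  then show ?thesis using v m by simp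
qed

lemma cubic:
  assumes g: "\<gamma> < 1" and c: "c \<ge> 0" and r: "0 < r1" "r1 < r2"
    and p1: "pp \<gamma> a c r1 = 0" and p2: "pp \<gamma> a c r2 = 0"
  shows "(\<forall>v. r1 < v \<and> v < r2 \<longrightarrow> pp \<gamma> a c v > 0) \<and> (\<forall>v. r2 \<le> v \<longrightarrow> pp \<gamma> a c v \<le> 0)
         \<and> EE \<gamma> c r1 > 0"
proof -
  define s where "s = 3 * c/(\<gamma> - 1) - r1 - r2"
  have V2: "(\<gamma> - 1) * (r1+r2+s) = 3 * c" using g by (simp add: s_def field_simps)
  define \<alpha> where "\<alpha> = (1 - \<gamma>) * a^2 - 3 * c^2 - (\<gamma> - 1) * (r1 * r2 + r1 * s + r2 * s)"
  define \<beta> where "\<beta> = - (c^3) + (\<gamma> - 1) * r1 * r2 * s"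
  have id: "pp \<gamma> a c v = (\<gamma> - 1) * (v-r1) * (v-r2) * (v-s) + \<alpha> * v + \<beta>" for v
  proof -
    have "pp \<gamma> a c v - ((\<gamma> - 1) * (v-r1) * (v-r2) * (v-s) + \<alpha> * v + \<beta>) = ((\<gamma> - 1) * (r1+r2+s) - 3 * c) * v^2"
      unfolding pp_def \<alpha>_def \<beta>_def by (simp add: algebra_simps power2_eq_square power3_eq_cube)
    then show ?thesis using V2 by simp
  qed
  have "\<alpha> * r1 + \<beta> = 0" using id[of r1] p1 by simp
  moreover have "\<alpha> * r2 + \<beta> = 0" using id[of r2] p2 by simp
  ultimately have "\<alpha> * r2 - \<alpha> * r1 = 0" by linarith
  then have "\<alpha> * (r2 - r1) = 0" by (simp add: right_diff_distrib)
  then have a0: "\<alpha> = 0" using r by simp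
  then have b0: "\<beta> = 0" using \<open>\<alpha> * r1 + \<beta> = 0\<close> by simp
  have fac: "pp \<gamma> a c v = (\<gamma> - 1) * (v-r1) * (v-r2) * (v-s)" for v using id a0 b0 by simp
  have "(\<gamma> - 1) * (r1 * r2) * s = c^3" using b0 unfolding \<beta>_def by (simp add: algebra_simps)
  moreover have "c^3 \<ge> 0" using c by simp
  moreover have "r1 * r2 > 0" using r by simp
  ultimately have s0: "s \<le> 0" using g
    by (smt (verit) mult_neg_pos mult_pos_pos)
  have P1: "pp \<gamma> a c v > 0" if "r1 < v" "v < r2" for v
  proof -
    have "(1 - \<gamma>) * (v - r1) * (r2 - v) * (v - s) > 0"
      using that g s0 r by (intro mult_pos_pos) auto
    then show ?thesis unfolding fac by (simp add: algebra_simps)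
  qed
  have P2: "pp \<gamma> a c v \<le> 0" if "r2 \<le> v" for v
  proof -
    have "(1 - \<gamma>) * (v - r1) * (v - r2) * (v - s) \<ge> 0"
      using that g s0 r by (intro mult_nonneg_nonneg) auto
    then show ?thesis unfolding fac by (simp add: algebra_simps)
  qed
  have E1: "EE \<gamma> c r1 = r1 * ((1 - \<gamma>) * a^2 + 3 * \<gamma> * r1^2 - 3 * (r1 + c)^2)"
  proof -
    have "r1 * ((1 - \<gamma>) * a^2 + 3 * \<gamma> * r1^2 - 3 * (r1 + c)^2) - EE \<gamma> c r1 = pp \<gamma> a c r1"
      unfolding pp_def EE_def by (simp add: algebra_simps power2_eq_square power3_eq_cube)
    then show ?thesis using p1 by simp
  qed
  have E2: "(1 - \<gamma>) * a^2 + 3 * \<gamma> * r1^2 - 3 * (r1 + c)^2 = (1 - \<gamma>) * (r2 - r1) * (r1 - s)"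
  proof -
    have "((1 - \<gamma>) * a^2 + 3 * \<gamma> * r1^2 - 3 * (r1 + c)^2) - (1 - \<gamma>) * (r2 - r1) * (r1 - s)
       = \<alpha> + 2 * r1 * ((\<gamma> - 1) * (r1 + r2 + s) - 3 * c)"
      unfolding \<alpha>_def by (simp add: algebra_simps power2_eq_square)
    then show ?thesis using a0 V2 by simp
  qed
  have "r1 * ((1 - \<gamma>) * (r2 - r1) * (r1 - s)) > 0"
    using g s0 r by (intro mult_pos_pos) auto
  then have "EE \<gamma> c r1 > 0" using E1 E2 by simp
  then show ?thesis using P1 P2 by blast
qed


lemma stable_det:
  assumes "stable_eq \<gamma> a c x"
  shows "jac11 \<gamma> a c x * jac22 \<gamma> a c x - jac12 \<gamma> a c x * jac21 \<gamma> a c x > 0"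
proof (rule ccontr)
  define t where "t = jac11 \<gamma> a c x + jac22 \<gamma> a c x"
  define d where "d = jac11 \<gamma> a c x * jac22 \<gamma> a c x - jac12 \<gamma> a c x * jac21 \<gamma> a c x"
  assume "\<not> ?thesis"
  then have d: "d \<le> 0" by (simp add: d_def)
  define z where "z = (t + sqrt (t^2 - 4 * d)) / 2"
  have disc: "t^2 - 4 * d \<ge> 0" using d by (smt (verit) zero_le_power2)
  have sq: "sqrt (t^2 - 4 * d) ^ 2 = t^2 - 4 * d" using disc by simp
  have "sqrt (t^2 - 4 * d) \<ge> sqrt (t^2)" using d by (intro real_sqrt_le_mono) simp
  then have "sqrt (t^2 - 4 * d) \<ge> \<bar>t\<bar>" by simp
  moreover have "- t \<le> \<bar>t\<bar>" by simp
  ultimately have "t + sqrt (t^2 - 4 * d) \<ge> 0" by linarith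
  then have z0: "z \<ge> 0" unfolding z_def by simp
  have "z^2 - t * z + d = 0"
    unfolding z_def using sq by (simp add: power2_eq_square field_simps)
  then have "(jac11 \<gamma> a c x - z) * (jac22 \<gamma> a c x - z) - jac12 \<gamma> a c x * jac21 \<gamma> a c x = 0"
    unfolding t_def d_def by (simp add: algebra_simps power2_eq_square)
  then have "jac_eigenvalue \<gamma> a c x (complex_of_real z)"
    unfolding jac_eigenvalue_def
    by (metis of_real_0 of_real_diff of_real_mult)
  then have "Re (complex_of_real z) < 0" using assms by (auto simp: stable_eq_def)
  then show False using z0 by simp
qed

lemma stable_EE:
  assumes st: "stable_eq \<gamma> a c (v,m)" and se: "storm_equilibrium \<gamma> a c (v,m)" and c: "c \<ge> 0"
  shows "EE \<gamma> c v < 0"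
proof -
  from root_of_storm[OF se c] have v: "v > 0" and m: "m = v/(v+c)" and p: "pp \<gamma> a c v = 0" by auto
  define D where "D = v + c"
  have D: "D > 0" using v c by (simp add: D_def)
  define det where "det = jac11 \<gamma> a c (v,m) * jac22 \<gamma> a c (v,m) - jac12 \<gamma> a c (v,m) * jac21 \<gamma> a c (v,m)"
  have det: "det > 0" using stable_det[OF st] by (simp add: det_def)
  have "det * D^3 = - v * D * EE \<gamma> c v - 3 * c * v * pp \<gamma> a c v"
  proof -
    have h1: "m * D = v" using m D by (simp add: D_def)
    have h2: "(1 - m) * D = c" using h1 by (simp add: algebra_simps D_def)
    have "det * D^3 = 2 * v * (D * D^3) - 2 * \<gamma> * (m * D)^3 * v * D
        - 3 * (m * D)^2 * ((1 - \<gamma>) * a^2 + \<gamma> * v^2) * ((1 - m) * D)"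
      unfolding det_def jac11_def jac12_def jac21_def jac22_def
      by (simp add: algebra_simps power2_eq_square power3_eq_cube D_def)
    also have "\<dots> = 2 * v * (D * D^3) - 2 * \<gamma> * (v * v^3) * D - 3 * c * v^2 * (1 - \<gamma>) * a^2 - 3 * c * \<gamma> * (v * v^3)"
      unfolding h1 h2 by (simp add: algebra_simps power2_eq_square power3_eq_cube)
    finally have "det * D^3 = 2 * v * (D * D^3) - 2 * \<gamma> * (v * v^3) * D - 3 * c * v^2 * (1 - \<gamma>) * a^2 - 3 * c * \<gamma> * (v * v^3)" .
    also have "\<dots> = - v * D * EE \<gamma> c v - 3 * c * v * pp \<gamma> a c v"
      unfolding EE_def pp_def D_def by (simp add: algebra_simps power2_eq_square power3_eq_cube)
    finally show ?thesis .
  qed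
  then have "det * D^3 = - v * D * EE \<gamma> c v" using p by simp
  moreover have "det * D^3 > 0" using det D by simp
  ultimately have "v * D * EE \<gamma> c v < 0" by linarith
  then show ?thesis using v D by (simp add: mult_less_0_iff)
qed

lemma two_roots_pos:
  assumes U: "storm_equilibrium \<gamma> a c U" and S: "storm_equilibrium \<gamma> a c S" and ne: "U \<noteq> S"
    and g: "\<gamma> < 1" and c: "c \<ge> 0"
  shows "\<exists>v>0. pp \<gamma> a c v > 0"
proof -
  obtain vu mu where Ue: "U = (vu, mu)" by (cases U)
  obtain vs ms where Se: "S = (vs, ms)" by (cases S)
  from root_of_storm[OF U[unfolded Ue] c] have u: "vu > 0" "mu = vu/(vu+c)" "pp \<gamma> a c vu = 0" by auto
  from root_of_storm[OF S[unfolded Se] c] have s: "vs > 0" "ms = vs/(vs+c)" "pp \<gamma> a c vs = 0" by auto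
  have "vu \<noteq> vs" using ne Ue Se u s by auto
  then consider "vu < vs" | "vs < vu" by linarith
  then show ?thesis
  proof cases
    case 1
    from cubic[OF g c u(1) 1 u(3) s(3)] have "pp \<gamma> a c ((vu+vs)/2) > 0" using 1 by auto
    then show ?thesis using u s by (intro exI[of _ "(vu+vs)/2"]) auto
  next
    case 2
    from cubic[OF g c s(1) 2 s(3) u(3)] have "pp \<gamma> a c ((vu+vs)/2) > 0" using 2 by auto
    then show ?thesis using u s by (intro exI[of _ "(vu+vs)/2"]) auto
  qed
qed

lemma below_stable:
  assumes U: "storm_equilibrium \<gamma> a c U" and S: "storm_equilibrium \<gamma> a c S" and ne: "U \<noteq> S"
    and st: "stable_eq \<gamma> a c S" and g: "\<gamma> < 1" and c: "c \<ge> 0" and pu: "pp \<gamma> a c u > 0"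
  shows "u < fst S"
proof -
  obtain vu mu where Ue: "U = (vu, mu)" by (cases U)
  obtain vs ms where Se: "S = (vs, ms)" by (cases S)
  from root_of_storm[OF U[unfolded Ue] c] have u: "vu > 0" "mu = vu/(vu+c)" "pp \<gamma> a c vu = 0" by auto
  from root_of_storm[OF S[unfolded Se] c] have s: "vs > 0" "ms = vs/(vs+c)" "pp \<gamma> a c vs = 0" by auto
  have E: "EE \<gamma> c vs < 0" using stable_EE[OF st[unfolded Se] S[unfolded Se] c] .
  have "vu \<noteq> vs" using ne Ue Se u s by auto
  then consider "vu < vs" | "vs < vu" by linarith
  then show ?thesis
  proof cases
    case 1
    from cubic[OF g c u(1) 1 u(3) s(3)] have "\<forall>v. vs \<le> v \<longrightarrow> pp \<gamma> a c v \<le> 0" by auto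
    show ?thesis
    proof (rule ccontr)
      assume "\<not> u < fst S"
      then have "vs \<le> u" using Se by simp
      then have "pp \<gamma> a c u \<le> 0" using \<open>\<forall>v. vs \<le> v \<longrightarrow> pp \<gamma> a c v \<le> 0\<close> by blast
      then show False using pu by simp
    qed
  next
    case 2
    from cubic[OF g c s(1) 2 s(3) u(3)] have "EE \<gamma> c vs > 0" by auto
    then show ?thesis using E by simp
  qed
qed


lemma good_point:
  assumes v: "v > 0" and c: "c \<ge> 0" and p: "pp \<gamma> a c v > 0"
  shows "\<exists>mq. 0 < mq \<and> mq < v/(v+c) \<and> (1 - \<gamma>) * a^2 * mq^3 - (1 - \<gamma> * mq^3) * v^2 > 0"
proof -
  define m0 where "m0 = v/(v+c)"
  have vc: "v + c > 0" using v c by simp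
  have m0: "m0 > 0" using v vc by (simp add: m0_def)
  define g where "g = (\<lambda>m. (1 - \<gamma>) * a^2 * m^3 - (1 - \<gamma> * m^3) * v^2)"
  have "g m0 * (v+c)^3 = (1 - \<gamma>) * a\<^sup>2 * v ^ 3 - ((v+c)^3 - \<gamma> * v ^ 3) * v\<^sup>2"
    unfolding g_def m0_def using vc by (simp add: field_simps power_divide)
  also have "\<dots> = v^2 * pp \<gamma> a c v"
    unfolding pp_def by (simp add: algebra_simps power2_eq_square power3_eq_cube)
  finally have "g m0 * (v+c)^3 = v^2 * pp \<gamma> a c v" .
  moreover have "v^2 * pp \<gamma> a c v > 0" using p v by simp
  ultimately have "g m0 * (v+c)^3 > 0" by simp
  then have g0: "g m0 > 0" using vc by (simp add: zero_less_mult_iff)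
  have "(g \<longlongrightarrow> g m0) (at_left m0)" unfolding g_def by (intro tendsto_intros)
  then have "eventually (\<lambda>m. g m > 0) (at_left m0)" using g0 by (rule order_tendstoD)
  moreover have "eventually (\<lambda>m. m \<in> {0<..<m0}) (at_left m0)" using m0 by (rule eventually_at_left_real)
  ultimately have "eventually (\<lambda>m. g m > 0 \<and> m \<in> {0<..<m0}) (at_left m0)" by (rule eventually_conj)
  then obtain mq where "g mq > 0 \<and> mq \<in> {0<..<m0}"
    using eventually_happens trivial_limit_at_left_real by blast
  then show ?thesis unfolding g_def m0_def by auto
qed

lemma barrier:
  fixes v m B F1 F2 :: "real \<Rightarrow> real"
  assumes dv: "\<And>t. (v has_real_derivative F1 t) (at t)"
    and dm: "\<And>t. (m has_real_derivative F2 t) (at t)"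
    and Bmono: "antimono B" and Bcont: "continuous_on UNIV B" and y: "y \<ge> 0"
    and H1: "\<And>t. v t = B t * y \<Longrightarrow> m t \<ge> mq \<Longrightarrow> F1 t > 0"
    and H2: "\<And>t. m t = mq \<Longrightarrow> v t \<ge> B t * y \<Longrightarrow> F2 t > 0"
    and H3: "eventually (\<lambda>t. v t > B t * y \<and> m t > mq) at_bot"
  shows "v t > B t * y \<and> m t > mq"
proof (rule ccontr)
  assume nt: "\<not> ?thesis"
  have vc: "continuous_on UNIV v" using dv
    by (meson DERIV_isCont continuous_at_imp_continuous_on)
  have mc: "continuous_on UNIV m" using dm
    by (meson DERIV_isCont continuous_at_imp_continuous_on)
  obtain T0 where T0: "\<And>t. t \<le> T0 \<Longrightarrow> v t > B t * y \<and> m t > mq"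
    using H3 unfolding eventually_at_bot_linorder by blast
  define Z where "Z = {t. v t \<le> B t * y} \<union> {t. m t \<le> mq}"
  have "t \<in> Z" using nt unfolding Z_def by (auto simp: not_less)
  then have Zne: "Z \<noteq> {}" by blast
  have Zcl: "closed Z" unfolding Z_def
    by (intro closed_Un closed_Collect_le continuous_intros vc mc Bcont)
  have Zlb: "T0 < s" if "s \<in> Z" for s
  proof (rule ccontr)
    assume "\<not> T0 < s" then have "s \<le> T0" by simp
    from T0[OF this] that show False unfolding Z_def by auto
  qed
  then have Zbdd: "bdd_below Z" by (meson bdd_below.I less_imp_le)
  define t1 where "t1 = Inf Z"
  have t1Z: "t1 \<in> Z" unfolding t1_def using Zne Zbdd Zcl by (rule closed_contains_Inf)
  have before: "v s > B s * y \<and> m s > mq" if "s < t1" for s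
  proof (rule ccontr)
    assume "\<not> (v s > B s * y \<and> m s > mq)"
    then have "s \<in> Z" unfolding Z_def by auto
    then have "t1 \<le> s" unfolding t1_def using Zbdd by (rule cInf_lower)
    then show False using that by simp
  qed
  have ev: "eventually (\<lambda>s. v s > B s * y \<and> m s > mq) (at_left t1)"
    unfolding eventually_at_left_field by (rule exI[of _ "t1 - 1"]) (simp add: before)
  have "((\<lambda>s. v s - B s * y) \<longlongrightarrow> v t1 - B t1 * y) (at_left t1)"
  proof -
    have "isCont v t1" "isCont B t1" using vc Bcont by (simp_all add: continuous_on_eq_continuous_at)
    then have "((\<lambda>s. v s - B s * y) \<longlongrightarrow> v t1 - B t1 * y) (at t1)"
      by (intro tendsto_intros) (simp_all add: isCont_def)
    then show ?thesis by (rule tendsto_mono[OF at_le, rotated]) simp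
  qed
  then have vge: "v t1 - B t1 * y \<ge> 0"
    by (rule tendsto_lowerbound) (use ev in \<open>auto elim: eventually_mono simp: trivial_limit_at_left_real\<close>)
  have "(m \<longlongrightarrow> m t1) (at_left t1)"
  proof -
    have "isCont m t1" using mc by (simp add: continuous_on_eq_continuous_at)
    then have "(m \<longlongrightarrow> m t1) (at t1)" by (simp add: isCont_def)
    then show ?thesis by (rule tendsto_mono[OF at_le, rotated]) simp
  qed
  then have mge: "m t1 \<ge> mq"
    by (rule tendsto_lowerbound) (use ev in \<open>auto elim: eventually_mono simp: trivial_limit_at_left_real\<close>)
  show False
  proof (cases "m t1 \<le> mq")
    case True
    then have "m t1 = mq" using mge by simp
    then have "F2 t1 > 0" using H2 vge by simp
    from DERIV_pos_inc_left[OF dm this] obtain d where d: "d > 0" "\<And>h. h > 0 \<Longrightarrow> h < d \<Longrightarrow> m (t1 - h) < m t1"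
      by blast
    have "m (t1 - d/2) < m t1" using d by simp
    moreover have "m (t1 - d/2) > mq" using before[of "t1 - d/2"] d by simp
    ultimately show False using \<open>m t1 = mq\<close> by simp
  next
    case False
    then have "v t1 \<le> B t1 * y" using t1Z unfolding Z_def by auto
    then have eq: "v t1 = B t1 * y" using vge by simp
    then have "F1 t1 > 0" using H1 mge by simp
    from DERIV_pos_inc_left[OF dv this] obtain d where d: "d > 0" "\<And>h. h > 0 \<Longrightarrow> h < d \<Longrightarrow> v (t1 - h) < v t1"
      by blast
    have "v (t1 - d/2) < v t1" using d by simp
    moreover have "v (t1 - d/2) > B (t1 - d/2) * y" using before[of "t1 - d/2"] d by simp
    moreover have "B t1 \<le> B (t1 - d/2)" using Bmono d by (simp add: antimonoD)
    then have "B t1 * y \<le> B (t1 - d/2) * y" using y by (simp add: mult_right_mono)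
    ultimately show False using eq by simp
  qed
qed

lemma pp_scale: "pp \<gamma> (k * a) (k * c) (k * w) = k^3 * pp \<gamma> a c w"
  unfolding pp_def by (simp add: algebra_simps power2_eq_square power3_eq_cube)

lemma pp_mono_c: assumes "c1 \<le> c2" "w + c1 \<ge> 0" shows "pp \<gamma> a c2 w \<le> pp \<gamma> a c1 w"
proof -
  have "(w + c1)^3 \<le> (w + c2)^3" using assms by (intro power_mono) auto
  then show ?thesis unfolding pp_def by simp
qed

lemma pp_mono_a: assumes "0 \<le> a1" "a1 \<le> a2" "w \<ge> 0" "\<gamma> \<le> 1" shows "pp \<gamma> a1 c w \<le> pp \<gamma> a2 c w"
proof -
  have "a1^2 \<le> a2^2" using assms by (intro power_mono) auto
  then have "(1 - \<gamma>) * a1^2 * w \<le> (1 - \<gamma>) * a2^2 * w" using assms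
    by (intro mult_right_mono mult_left_mono) auto
  then show ?thesis unfolding pp_def by simp
qed

lemma pp_a0_neg: assumes "v > 0" "c > 0" "\<gamma> \<le> 1" shows "pp \<gamma> 0 c v < 0"
proof -
  have "\<gamma> * v^3 \<le> v^3" using assms by (simp add: mult_left_le_one_le)
  moreover have "v^3 < (v + c)^3" using assms by (intro power_strict_mono) auto
  ultimately show ?thesis unfolding pp_def by simp
qed

lemma storm_c0:
  assumes "storm_equilibrium \<gamma> a 0 x" "\<gamma> < 1"
  shows "x = (\<bar>a\<bar>, 1)"
proof -
  obtain v m where x: "x = (v,m)" by (cases x)
  from root_of_storm[OF assms(1)[unfolded x]] have v: "v > 0" and m: "m = v/(v+0)" and p: "pp \<gamma> a 0 v = 0"
    by auto
  have m1: "m = 1" using m v by simp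
  have "(1 - \<gamma>) * (a^2 - v^2) * v = 0" using p unfolding pp_def
    by (simp add: algebra_simps power2_eq_square power3_eq_cube)
  then have "a^2 = v^2" using v assms(2) by simp
  then have "a = v \<or> a = - v" by (simp add: power2_eq_iff)
  then have "\<bar>a\<bar> = v" using v by auto
  then show ?thesis using x m1 by simp
qed

lemma extremum:
  fixes f :: "real \<Rightarrow> real"
  assumes fc: "continuous_on UNIV f" and f1: "(f \<longlongrightarrow> L1) at_bot" and f2: "(f \<longlongrightarrow> L2) at_top"
  shows "(\<exists>t. \<forall>s. f s \<le> f t) \<or> (\<forall>s. f s \<le> L1) \<or> (\<forall>s. f s \<le> L2)"
proof (cases "\<exists>t0. f t0 > max L1 L2")
  case False
  then have "\<forall>s. f s \<le> max L1 L2" using not_less by blast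
  then show ?thesis by (cases "L1 \<le> L2") (auto simp: max_def)
next
  case True
  then obtain t0 where t0: "f t0 > max L1 L2" by blast
  have "eventually (\<lambda>s. f s < f t0) at_bot" using f1 t0 by (intro order_tendstoD(2)) auto
  then obtain a where a: "\<And>s. s \<le> a \<Longrightarrow> f s < f t0" unfolding eventually_at_bot_linorder by blast
  have "eventually (\<lambda>s. f s < f t0) at_top" using f2 t0 by (intro order_tendstoD(2)) auto
  then obtain b where b: "\<And>s. s \<ge> b \<Longrightarrow> f s < f t0" unfolding eventually_at_top_linorder by blast
  define K where "K = {min a t0 .. max b t0}"
  have "\<exists>x\<in>K. \<forall>y\<in>K. f y \<le> f x"
    unfolding K_def by (rule continuous_attains_sup) (auto intro: continuous_on_subset[OF fc])
  then obtain t where tK: "t \<in> K" and tm: "\<And>y. y \<in> K \<Longrightarrow> f y \<le> f t" by blast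
  have t0K: "t0 \<in> K" unfolding K_def by auto
  have "f s \<le> f t" for s
  proof (cases "s \<in> K")
    case True then show ?thesis by (rule tm)
  next
    case False
    then have "s \<le> a \<or> s \<ge> b" unfolding K_def by auto
    then have "f s < f t0" using a b by auto
    then show ?thesis using tm[OF t0K] by simp
  qed
  then show ?thesis by blast
qed

lemma gmono:
  fixes \<gamma> mq m a w :: real
  assumes "0 \<le> \<gamma>" "\<gamma> \<le> 1" "0 \<le> mq" "mq \<le> m"
  shows "(1 - \<gamma>) * a^2 * mq^3 - (1 - \<gamma> * mq^3) * w^2 \<le> (1 - \<gamma>) * a^2 * m^3 - (1 - \<gamma> * m^3) * w^2"
proof -
  have "mq^3 \<le> m^3" using power_mono[of mq m 3] assms by simp
  moreover have "(1 - \<gamma>) * a^2 + \<gamma> * w^2 \<ge> 0" using assms by simp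
  ultimately have "mq^3 * ((1 - \<gamma>) * a^2 + \<gamma> * w^2) \<le> m^3 * ((1 - \<gamma>) * a^2 + \<gamma> * w^2)"
    by (rule mult_right_mono)
  then show ?thesis by (simp add: algebra_simps)
qed

lemma H1_I:
  fixes \<gamma> A as mq m vs :: real
  assumes g: "0 \<le> \<gamma>" "\<gamma> \<le> 1" and A: "A > 0" and as: "as > 0" and mq: "0 \<le> mq" "mq \<le> m"
    and gq: "(1 - \<gamma>) * as^2 * mq^3 - (1 - \<gamma> * mq^3) * vs^2 > 0"
  shows "(1 - \<gamma>) * A^2 * m^3 - (1 - \<gamma> * m^3) * (A * (vs / as))^2 > 0"
proof -
  have e: "(1 - \<gamma>) * A^2 * m^3 - (1 - \<gamma> * m^3) * (A * (vs / as))^2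
      = (A / as)^2 * ((1 - \<gamma>) * as^2 * m^3 - (1 - \<gamma> * m^3) * vs^2)"
    using as by (simp add: power_mult_distrib power_divide field_simps)
  have "(1 - \<gamma>) * as^2 * m^3 - (1 - \<gamma> * m^3) * vs^2 > 0"
    using gmono[OF g mq, of as vs] gq by linarith
  then show ?thesis unfolding e using A as by simp
qed

lemma H1_II:
  fixes \<gamma> A C as cs mq m vs :: real
  assumes g: "0 \<le> \<gamma>" "\<gamma> \<le> 1" and A: "A > 0" and C: "C > 0" and as: "as > 0" and cs: "cs > 0"
    and ratio: "C / A \<le> cs / as" and mq: "0 \<le> mq" "mq \<le> m"
    and gq: "(1 - \<gamma>) * as^2 * mq^3 - (1 - \<gamma> * mq^3) * vs^2 > 0"
  shows "(1 - \<gamma>) * A^2 * m^3 - (1 - \<gamma> * m^3) * (C * (vs / cs))^2 > 0"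
proof -
  define a' where "a' = A * cs / C"
  have "C * as \<le> cs * A" using ratio A as by (simp add: field_simps)
  then have a'ge: "as \<le> a'" using C unfolding a'_def by (simp add: pos_le_divide_eq mult.commute)
  have e: "(1 - \<gamma>) * A^2 * m^3 - (1 - \<gamma> * m^3) * (C * (vs / cs))^2
      = (C / cs)^2 * ((1 - \<gamma>) * a'^2 * m^3 - (1 - \<gamma> * m^3) * vs^2)"
    using C cs unfolding a'_def by (simp add: power_mult_distrib power_divide field_simps)
  have m0: "m \<ge> 0" using mq by simp
  have "as^2 \<le> a'^2" using a'ge as by (intro power_mono) auto
  then have "(1 - \<gamma>) * as^2 * m^3 \<le> (1 - \<gamma>) * a'^2 * m^3" using g m0
    by (intro mult_right_mono mult_left_mono) auto
  moreover have "(1 - \<gamma>) * as^2 * m^3 - (1 - \<gamma> * m^3) * vs^2 > 0"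
    using gmono[OF g mq, of as vs] gq by linarith
  ultimately have "(1 - \<gamma>) * a'^2 * m^3 - (1 - \<gamma> * m^3) * vs^2 > 0" by linarith
  then show ?thesis unfolding e using C cs by simp
qed

lemma H2_I:
  fixes A C as cs vs mq v :: real
  assumes A: "A > 0" and C: "C > 0" and as: "as > 0" and cs: "cs > 0" and vs: "vs > 0"
    and ratio: "C / A \<le> cs / as" and mq: "0 \<le> mq" "mq < vs / (vs + cs)"
    and v: "v \<ge> A * (vs / as)"
  shows "(1 - mq) * v - C * mq > 0"
proof -
  have mq1: "mq * (vs + cs) < vs" using mq vs cs by (simp add: pos_less_divide_eq)
  have mql: "mq < 1"
  proof (rule ccontr)
    assume "\<not> mq < 1"
    then have "1 * (vs + cs) \<le> mq * (vs + cs)" using vs cs by (intro mult_right_mono) auto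
    then show False using mq1 cs by simp
  qed
  have "(1 - mq) * v \<ge> (1 - mq) * (A * (vs / as))" using v mql by (intro mult_left_mono) auto
  moreover have "C * as \<le> cs * A" using ratio A as by (simp add: field_simps)
  then have "C * as * mq \<le> cs * A * mq" using mq by (intro mult_right_mono) auto
  then have "C * mq * as \<le> cs * A * mq" by (simp add: algebra_simps)
  moreover have "(1 - mq) * (A * (vs / as)) - C * mq = (A * ((1 - mq) * vs) - C * mq * as) / as"
    using as by (simp add: field_simps)
  moreover have "A * ((1 - mq) * vs) - cs * A * mq > 0"
  proof -
    have "(1 - mq) * vs - cs * mq > 0" using mq1 by (simp add: algebra_simps)
    then have "A * ((1 - mq) * vs - cs * mq) > 0" using A by simp
    then show ?thesis by (simp add: algebra_simps)
  qed
  ultimately have "A * ((1 - mq) * vs) - C * mq * as > 0" by linarith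
  then have "(A * ((1 - mq) * vs) - C * mq * as) / as > 0" using as by simp
  then have "(1 - mq) * (A * (vs / as)) - C * mq > 0" using \<open>(1 - mq) * (A * (vs / as)) - C * mq = _\<close> by simp
  then show ?thesis using \<open>(1 - mq) * v \<ge> _\<close> by linarith
qed

lemma H2_II:
  fixes C cs vs mq v :: real
  assumes C: "C > 0" and cs: "cs > 0" and vs: "vs > 0"
    and mq: "0 \<le> mq" "mq < vs / (vs + cs)"
    and v: "v \<ge> C * (vs / cs)"
  shows "(1 - mq) * v - C * mq > 0"
proof -
  have mq1: "mq * (vs + cs) < vs" using mq vs cs by (simp add: pos_less_divide_eq)
  have mql: "mq < 1"
  proof (rule ccontr)
    assume "\<not> mq < 1"
    then have "1 * (vs + cs) \<le> mq * (vs + cs)" using vs cs by (intro mult_right_mono) auto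
    then show False using mq1 cs by simp
  qed
  have "(1 - mq) * v \<ge> (1 - mq) * (C * (vs / cs))" using v mql by (intro mult_left_mono) auto
  moreover have "(1 - mq) * (C * (vs / cs)) - C * mq = (C / cs) * ((1 - mq) * vs - cs * mq)"
    using cs by (simp add: field_simps)
  moreover have "(1 - mq) * vs - cs * mq > 0" using mq1 by (simp add: algebra_simps)
  moreover have "(C / cs) * ((1 - mq) * vs - cs * mq) > 0"
    using C cs \<open>(1 - mq) * vs - cs * mq > 0\<close> by simp
  ultimately show ?thesis by linarith
qed

lemma frac_lt: fixes u V C :: real assumes "0 < u" "u < V" "C > 0" shows "u/(u+C) < V/(V+C)"
proof -
  have "u * (V + C) < V * (u + C)" using assms by (simp add: algebra_simps)
  then show ?thesis using assms by (simp add: divide_less_eq less_divide_eq field_simps)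
qed

lemma frac_le: fixes u C C' :: real assumes "0 < u" "0 < C" "C \<le> C'" shows "u/(u+C') \<le> u/(u+C)"
  using assms by (intro divide_left_mono) auto

lemma frac_scale: fixes k w c :: real assumes "k > 0" "w + c \<noteq> 0" shows "(k*w)/(k*w + k*c) = w/(w+c)"
proof -
  have "k*w + k*c = k * (w + c)" by (simp add: algebra_simps)
  then show ?thesis using assms by simp
qed

lemma final_contra:
  fixes v B :: "real \<Rightarrow> real"
  assumes "(v \<longlongrightarrow> 0) at_top" "\<And>t. v t > B t * y" "antimono B" "(B \<longlongrightarrow> Bp) at_top" "Bp > 0" "y > 0"
  shows False
proof -
  have Bge: "Bp \<le> B t" for t
  proof (rule tendsto_upperbound[OF assms(4)])
    show "eventually (\<lambda>s. B s \<le> B t) at_top"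
      unfolding eventually_at_top_linorder using assms(3) by (auto intro!: exI[of _ t] simp: antimonoD)
  qed simp
  have "eventually (\<lambda>t. v t < Bp * y) at_top" using assms(1,5,6) by (intro order_tendstoD(2)) auto
  then obtain t where "v t < Bp * y" using eventually_happens trivial_limit_at_top_linorder by blast
  moreover have "Bp * y \<le> B t * y" using Bge assms(6) by (simp add: mult_right_mono)
  ultimately show False using assms(2)[of t] by simp
qed

lemma H3_lemma:
  fixes v m B :: "real \<Rightarrow> real"
  assumes "(v \<longlongrightarrow> vS) at_bot" "(m \<longlongrightarrow> mS) at_bot" "(B \<longlongrightarrow> B0) at_bot" "B0 * y < vS" "mq < mS"
  shows "eventually (\<lambda>t. v t > B t * y \<and> m t > mq) at_bot"
proof -
  have "((\<lambda>t. v t - B t * y) \<longlongrightarrow> vS - B0 * y) at_bot" using assms by (intro tendsto_intros)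
  then have "eventually (\<lambda>t. v t - B t * y > 0) at_bot" using assms(4) by (intro order_tendstoD(1)) auto
  moreover have "eventually (\<lambda>t. m t > mq) at_bot" using assms(2,5) by (rule order_tendstoD(1))
  ultimately show ?thesis by eventually_elim auto
qed

theorem theorem3p8:
  fixes \<gamma> r lm lp Vpm :: real
    and \<Lambda> Vp c :: "real \<Rightarrow> real"
    and Um Sm Up Sp :: "real \<times> real"
    and pu ps :: "real \<Rightarrow> real \<times> real"
  assumes gamma: "0 \<le> \<gamma>" "\<gamma> \<le> 1"
    and Lambda_C2: "C2_fun \<Lambda>"
    and Lambda_mono: "mono \<Lambda>"
    and Lambda_bot: "(\<Lambda> \<longlongrightarrow> lm) at_bot"
    and Lambda_top: "(\<Lambda> \<longlongrightarrow> lp) at_top"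
    and r_pos: "r > 0"
    and Vp_cont: "continuous_on UNIV Vp"
    and c_cont: "continuous_on UNIV c"
    and Vp_pos: "\<And>\<tau>. Vp (\<Lambda> (r * \<tau>)) > 0"
    and c_pos: "\<And>\<tau>. c (\<Lambda> (r * \<tau>)) > 0"
    and Vpm_lim: "((\<lambda>\<tau>. Vp (\<Lambda> (r * \<tau>))) \<longlongrightarrow> Vpm) at_bot"
    and Vpm_pos: "Vpm > 0"
    (* three equilibria at lambda^- : O, saddle U^-, stable S^- *)
    and eq_minus: "phys_equilibria \<gamma> (Vp lm / Vpm) (c lm) = {(0, 0), Um, Sm}"
    and storm_minus: "storm_equilibrium \<gamma> (Vp lm / Vpm) (c lm) Um"
                     "storm_equilibrium \<gamma> (Vp lm / Vpm) (c lm) Sm" "Um \<noteq> Sm"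
    and Um_saddle: "saddle_eq \<gamma> (Vp lm / Vpm) (c lm) Um"
    and Sm_stable: "stable_eq \<gamma> (Vp lm / Vpm) (c lm) Sm"
    (* three equilibria at lambda^+ : O, U^+, S^+ *)
    and eq_plus: "phys_equilibria \<gamma> (Vp lp / Vpm) (c lp) = {(0, 0), Up, Sp}"
    and storm_plus: "storm_equilibrium \<gamma> (Vp lp / Vpm) (c lp) Up"
                    "storm_equilibrium \<gamma> (Vp lp / Vpm) (c lp) Sp" "Up \<noteq> Sp"
    (* continuous paths of saddle and stable storm equilibria *)
    and pu_cont: "continuous_on UNIV pu"
    and ps_cont: "continuous_on UNIV ps"
    and pu_saddle: "\<And>\<tau>. storm_equilibrium \<gamma> (Vp (\<Lambda> (r * \<tau>)) / Vpm) (c (\<Lambda> (r * \<tau>))) (pu \<tau>)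
                        \<and> saddle_eq \<gamma> (Vp (\<Lambda> (r * \<tau>)) / Vpm) (c (\<Lambda> (r * \<tau>))) (pu \<tau>)"
    and ps_stable: "\<And>\<tau>. storm_equilibrium \<gamma> (Vp (\<Lambda> (r * \<tau>)) / Vpm) (c (\<Lambda> (r * \<tau>))) (ps \<tau>)
                        \<and> stable_eq \<gamma> (Vp (\<Lambda> (r * \<tau>)) / Vpm) (c (\<Lambda> (r * \<tau>))) (ps \<tau>)"
    and pu_ne_ps: "\<And>\<tau>. pu \<tau> \<noteq> ps \<tau>"
    and pu_bot: "(pu \<longlongrightarrow> Um) at_bot" and pu_top: "(pu \<longlongrightarrow> Up) at_top"
    and ps_bot: "(ps \<longlongrightarrow> Sm) at_bot" and ps_top: "(ps \<longlongrightarrow> Sp) at_top"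
    (* monotonicity hypothesis *)
    and nonincr: "antimono (\<lambda>\<tau>. Vp (\<Lambda> (r * \<tau>))) \<or> antimono (\<lambda>\<tau>. c (\<Lambda> (r * \<tau>)))"
  shows "\<forall>v m :: real \<Rightarrow> real.
           (\<forall>\<tau>. ((\<lambda>\<tau>. (v \<tau>, m \<tau>)) has_vector_derivative
                    storm_field \<gamma> (Vp (\<Lambda> (r * \<tau>)) / Vpm) (c (\<Lambda> (r * \<tau>))) (v \<tau>, m \<tau>)) (at \<tau>))
         \<and> ((\<lambda>\<tau>. (v \<tau>, m \<tau>)) \<longlongrightarrow> Sm) at_bot
         \<longrightarrow> \<not> ((\<lambda>\<tau>. (v \<tau>, m \<tau>)) \<longlongrightarrow> (0, 0)) at_top"
proof (intro allI impI notI)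
  fix v m :: "real \<Rightarrow> real"
  assume H: "(\<forall>\<tau>. ((\<lambda>\<tau>. (v \<tau>, m \<tau>)) has_vector_derivative
                    storm_field \<gamma> (Vp (\<Lambda> (r * \<tau>)) / Vpm) (c (\<Lambda> (r * \<tau>))) (v \<tau>, m \<tau>)) (at \<tau>))
         \<and> ((\<lambda>\<tau>. (v \<tau>, m \<tau>)) \<longlongrightarrow> Sm) at_bot"
  assume top: "((\<lambda>\<tau>. (v \<tau>, m \<tau>)) \<longlongrightarrow> (0, 0)) at_top"
  define A where "A = (\<lambda>\<tau>. Vp (\<Lambda> (r * \<tau>)) / Vpm)"
  define C where "C = (\<lambda>\<tau>. c (\<Lambda> (r * \<tau>)))"
  define A0 where "A0 = Vp lm / Vpm"
  define C0 where "C0 = c lm"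
  define Ap where "Ap = Vp lp / Vpm"
  define Cp where "Cp = c lp"
  have Apos: "A t > 0" for t using Vp_pos Vpm_pos by (simp add: A_def)
  have Cpos: "C t > 0" for t using c_pos by (simp add: C_def)
  from Lambda_C2 obtain f' where "\<forall>t. (\<Lambda> has_real_derivative f' t) (at t)" unfolding C2_fun_def by blast
  then have Lc: "isCont \<Lambda> t" for t using DERIV_isCont by blast
  have Vpc: "isCont Vp x" for x using Vp_cont by (simp add: continuous_on_eq_continuous_at)
  have cc: "isCont c x" for x using c_cont by (simp add: continuous_on_eq_continuous_at)
  have Lrc: "isCont (\<lambda>\<tau>. \<Lambda> (r * \<tau>)) t" for t
    by (rule continuous_at_compose[unfolded o_def, OF _ Lc]) (intro continuous_intros)
  have Acont: "continuous_on UNIV A"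
    unfolding A_def using Vpm_pos
    by (intro continuous_at_imp_continuous_on ballI continuous_intros
        continuous_at_compose[unfolded o_def, OF Lrc Vpc]) auto
  have Ccont: "continuous_on UNIV C"
    unfolding C_def
    by (intro continuous_at_imp_continuous_on ballI continuous_at_compose[unfolded o_def, OF Lrc cc])
  have rbot: "filterlim (\<lambda>\<tau>. r * \<tau>) at_bot at_bot"
    using filterlim_tendsto_pos_mult_at_bot[OF tendsto_const r_pos filterlim_ident] .
  have rtop: "filterlim (\<lambda>\<tau>. r * \<tau>) at_top at_top"
    using filterlim_tendsto_pos_mult_at_top[OF tendsto_const r_pos filterlim_ident] .
  have Lbot: "((\<lambda>\<tau>. \<Lambda> (r * \<tau>)) \<longlongrightarrow> lm) at_bot" using filterlim_compose[OF Lambda_bot rbot] .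
  have Ltop: "((\<lambda>\<tau>. \<Lambda> (r * \<tau>)) \<longlongrightarrow> lp) at_top" using filterlim_compose[OF Lambda_top rtop] .
  have A_bot: "(A \<longlongrightarrow> A0) at_bot" unfolding A_def A0_def
    by (intro tendsto_divide tendsto_const isCont_tendsto_compose[OF Vpc Lbot]) (use Vpm_pos in auto)
  have A_top: "(A \<longlongrightarrow> Ap) at_top" unfolding A_def Ap_def
    by (intro tendsto_divide tendsto_const isCont_tendsto_compose[OF Vpc Ltop]) (use Vpm_pos in auto)
  have C_bot: "(C \<longlongrightarrow> C0) at_bot" unfolding C_def C0_def
    by (rule isCont_tendsto_compose[OF cc Lbot])
  have C_top: "(C \<longlongrightarrow> Cp) at_top" unfolding C_def Cp_def
    by (rule isCont_tendsto_compose[OF cc Ltop])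
  have A0ge: "A0 \<ge> 0"
    by (rule tendsto_lowerbound[OF A_bot]) (auto intro: always_eventually less_imp_le Apos)
  have Apge: "Ap \<ge> 0"
    by (rule tendsto_lowerbound[OF A_top]) (auto intro: always_eventually less_imp_le Apos)
  have C0ge: "C0 \<ge> 0"
    by (rule tendsto_lowerbound[OF C_bot]) (auto intro: always_eventually less_imp_le Cpos)
  have Cpge: "Cp \<ge> 0"
    by (rule tendsto_lowerbound[OF C_top]) (auto intro: always_eventually less_imp_le Cpos)
  have pu0: "storm_equilibrium \<gamma> (A 0) (C 0) (pu 0)" using pu_saddle[of 0] by (simp add: A_def C_def)
  have glt: "\<gamma> < 1"
  proof (rule ccontr)
    assume "\<not> \<gamma> < 1" then have g1: "\<gamma> = 1" using gamma by simp
    obtain v0 m0 where "pu 0 = (v0, m0)" by (cases "pu 0")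
    with root_of_storm[of \<gamma> "A 0" "C 0" v0 m0] pu0 Cpos[of 0]
    have "v0 > 0" "pp \<gamma> (A 0) (C 0) v0 = 0" by auto
    moreover have "v0^3 < (v0 + C 0)^3" using \<open>v0 > 0\<close> Cpos[of 0] by (intro power_strict_mono) auto
    ultimately show False using g1 by (simp add: pp_def)
  qed
  have smU: "storm_equilibrium \<gamma> A0 C0 Um" and smS: "storm_equilibrium \<gamma> A0 C0 Sm"
    using storm_minus by (simp_all add: A0_def C0_def)
  have spU: "storm_equilibrium \<gamma> Ap Cp Up" and spS: "storm_equilibrium \<gamma> Ap Cp Sp"
    using storm_plus by (simp_all add: Ap_def Cp_def)
  have Sst: "stable_eq \<gamma> A0 C0 Sm" using Sm_stable by (simp add: A0_def C0_def)
  have C0pos: "C0 > 0"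
  proof (rule ccontr)
    assume "\<not> C0 > 0" then have "C0 = 0" using C0ge by simp
    then have "Um = (\<bar>A0\<bar>, 1)" "Sm = (\<bar>A0\<bar>, 1)"
      using storm_c0[OF _ glt, of A0 Um] storm_c0[OF _ glt, of A0 Sm] smU smS by auto
    then show False using storm_minus(3) by simp
  qed
  have Cppos: "Cp > 0"
  proof (rule ccontr)
    assume "\<not> Cp > 0" then have "Cp = 0" using Cpge by simp
    then have "Up = (\<bar>Ap\<bar>, 1)" "Sp = (\<bar>Ap\<bar>, 1)"
      using storm_c0[OF _ glt, of Ap Up] storm_c0[OF _ glt, of Ap Sp] spU spS by auto
    then show False using storm_plus(3) by simp
  qed
  obtain vS mS where SmE: "Sm = (vS, mS)" by (cases Sm)
  from root_of_storm[OF smS[unfolded SmE] C0ge] have vS: "vS > 0" and mS: "mS = vS/(vS+C0)"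
    and pS: "pp \<gamma> A0 C0 vS = 0" by auto
  have A0pos: "A0 > 0"
  proof (rule ccontr)
    assume "\<not> A0 > 0" then have "A0 = 0" using A0ge by simp
    then show False using pS pp_a0_neg[OF vS C0pos gamma(2)] by simp
  qed
  obtain vP mP where SpE: "Sp = (vP, mP)" by (cases Sp)
  from root_of_storm[OF spS[unfolded SpE] Cpge] have vP: "vP > 0" and pP: "pp \<gamma> Ap Cp vP = 0" by auto
  have Appos: "Ap > 0"
  proof (rule ccontr)
    assume "\<not> Ap > 0" then have "Ap = 0" using Apge by simp
    then show False using pP pp_a0_neg[OF vP Cppos gamma(2)] by simp
  qed
  define f where "f = (\<lambda>t. C t / A t)"
  have fc: "continuous_on UNIV f" unfolding f_def
    using Acont Ccont Apos by (intro continuous_intros) (auto simp: less_imp_neq[symmetric])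
  have f_bot: "(f \<longlongrightarrow> C0 / A0) at_bot" unfolding f_def
    using A_bot C_bot A0pos by (intro tendsto_divide) auto
  have f_top: "(f \<longlongrightarrow> Cp / Ap) at_top" unfolding f_def
    using A_top C_top Appos by (intro tendsto_divide) auto
  have "\<exists>a1 c1 w1. a1 > 0 \<and> c1 > 0 \<and> (\<forall>t. f t \<le> c1 / a1) \<and> C0 / A0 \<le> c1 / a1 \<and> w1 > 0 \<and> pp \<gamma> a1 c1 w1 > 0"
  proof -
    from extremum[OF fc f_bot f_top] consider (max) t where "\<forall>s. f s \<le> f t" | (lm) "\<forall>s. f s \<le> C0 / A0"
      | (lp) "\<forall>s. f s \<le> Cp / Ap" by blast
    then show ?thesis
    proof cases
      case max
      have "storm_equilibrium \<gamma> (A t) (C t) (pu t)" "storm_equilibrium \<gamma> (A t) (C t) (ps t)"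
        using pu_saddle[of t] ps_stable[of t] by (simp_all add: A_def C_def)
      from two_roots_pos[OF this pu_ne_ps glt less_imp_le[OF Cpos]] obtain w1 where w1: "w1 > 0" "pp \<gamma> (A t) (C t) w1 > 0"
        by blast
      have "C0 / A0 \<le> f t"
        by (rule tendsto_upperbound[OF f_bot]) (use max in \<open>auto intro: always_eventually\<close>)
      then show ?thesis using max w1 Apos Cpos unfolding f_def by blast
    next
      case lm
      from two_roots_pos[OF smU smS storm_minus(3) glt C0ge] obtain w1 where "w1 > 0" "pp \<gamma> A0 C0 w1 > 0"
        by blast
      then show ?thesis using lm A0pos C0pos by blast
    next
      case lp
      from two_roots_pos[OF spU spS storm_plus(3) glt Cpge] obtain w1 where "w1 > 0" "pp \<gamma> Ap Cp w1 > 0"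
        by blast
      moreover have "C0 / A0 \<le> Cp / Ap"
        by (rule tendsto_upperbound[OF f_bot]) (use lp in \<open>auto intro: always_eventually\<close>)
      ultimately show ?thesis using lp Appos Cppos by blast
    qed
  qed
  then obtain a1 c1 w1 where a1: "a1 > 0" and c1: "c1 > 0" and fle: "\<And>t. C t / A t \<le> c1 / a1"
    and r0: "C0 / A0 \<le> c1 / a1" and w1: "w1 > 0" and pw: "pp \<gamma> a1 c1 w1 > 0"
    unfolding f_def by blast
  from good_point[OF w1 less_imp_le[OF c1] pw] obtain mq where mq0: "0 < mq" and mq1: "mq < w1 / (w1 + c1)"
    and gq: "(1 - \<gamma>) * a1^2 * mq^3 - (1 - \<gamma> * mq^3) * w1^2 > 0" by blast
  define F1 where "F1 = (\<lambda>t. (1 - \<gamma>) * (A t)^2 * (m t)^3 - (1 - \<gamma> * (m t)^3) * (v t)^2)"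
  define F2 where "F2 = (\<lambda>t. (1 - m t) * v t - C t * m t)"
  have dvm: "((\<lambda>\<tau>. (v \<tau>, m \<tau>)) has_vector_derivative (F1 t, F2 t)) (at t)" for t
    using H unfolding A_def C_def F1_def F2_def by (simp add: storm_field_def)
  have dv: "(v has_real_derivative F1 t) (at t)" for t using vd_fst[OF dvm] .
  have dm: "(m has_real_derivative F2 t) (at t)" for t using vd_snd[OF dvm] .
  have v_bot: "(v \<longlongrightarrow> vS) at_bot"
    using tendsto_fst[OF conjunct2[OF H]] SmE by simp
  have m_bot: "(m \<longlongrightarrow> mS) at_bot"
    using tendsto_snd[OF conjunct2[OF H]] SmE by simp
  have v_top: "(v \<longlongrightarrow> 0) at_top"
    using tendsto_fst[OF top] by simp
  have r0': "C0 * a1 \<le> c1 * A0" using r0 A0pos a1 by (simp add: field_simps)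
  from nonincr show False
  proof
    assume am: "antimono (\<lambda>\<tau>. Vp (\<Lambda> (r * \<tau>)))"
    have Aam: "antimono A" unfolding A_def using am Vpm_pos
      by (auto simp: antimono_def intro: divide_right_mono)
    define y where "y = w1 / a1"
    have y: "y > 0" using w1 a1 by (simp add: y_def)
    define u where "u = A0 * y"
    define k where "k = A0 / a1"
    have k: "k > 0" using A0pos a1 by (simp add: k_def)
    have "pp \<gamma> A0 C0 u = pp \<gamma> (k * a1) (k * (a1 * C0 / A0)) (k * w1)"
      using a1 A0pos by (simp add: k_def u_def y_def)
    also have "\<dots> = k^3 * pp \<gamma> a1 (a1 * C0 / A0) w1" by (rule pp_scale)
    also have "\<dots> \<ge> k^3 * pp \<gamma> a1 c1 w1"
    proof -
      have "a1 * C0 / A0 \<le> c1" using r0' A0pos by (simp add: pos_divide_le_eq mult.commute)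
      moreover have "w1 + a1 * C0 / A0 \<ge> 0" using w1 a1 C0ge A0pos by simp
      ultimately show ?thesis using k by (intro mult_left_mono pp_mono_c) auto
    qed
    finally have "pp \<gamma> A0 C0 u > 0" using pw k by (smt (verit) mult_pos_pos zero_less_power)
    from below_stable[OF smU smS storm_minus(3) Sst glt C0ge this] have uS: "u < vS" using SmE by simp
    have u0: "u > 0" using A0pos y by (simp add: u_def)
    have "mq < u / (u + k * c1)"
      using mq1 frac_scale[of k w1 c1] k w1 c1 by (simp add: u_def y_def k_def)
    also have "\<dots> \<le> u / (u + C0)"
    proof (rule frac_le[OF u0 C0pos])
      show "C0 \<le> k * c1" using r0' a1 by (simp add: k_def pos_le_divide_eq field_simps)
    qed
    also have "\<dots> < vS / (vS + C0)" by (rule frac_lt[OF u0 uS C0pos])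
    finally have mqS: "mq < mS" using mS by simp
    have bar: "v t > A t * y \<and> m t > mq" for t
    proof (rule barrier[OF dv dm Aam Acont less_imp_le[OF y]])
      fix t assume "v t = A t * y" "mq \<le> m t"
      then show "F1 t > 0" unfolding F1_def y_def
        using H1_I[OF gamma Apos[of t] a1 less_imp_le[OF mq0] _ gq] by simp
    next
      fix t assume "m t = mq" "A t * y \<le> v t"
      then show "F2 t > 0" unfolding F2_def y_def
        using H2_I[OF Apos[of t] Cpos[of t] a1 c1 w1 fle[of t] less_imp_le[OF mq0] mq1] by simp
    next
      show "eventually (\<lambda>t. v t > A t * y \<and> m t > mq) at_bot"
        using H3_lemma[OF v_bot m_bot A_bot _ mqS] uS by (simp add: u_def)
    qed
    show False using final_contra[OF v_top _ Aam A_top Appos y] bar by blast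
  next
    assume cm: "antimono (\<lambda>\<tau>. c (\<Lambda> (r * \<tau>)))"
    have Cam: "antimono C" unfolding C_def using cm by simp
    define y where "y = w1 / c1"
    have y: "y > 0" using w1 c1 by (simp add: y_def)
    define u where "u = C0 * y"
    define k where "k = C0 / c1"
    have k: "k > 0" using C0pos c1 by (simp add: k_def)
    have "pp \<gamma> A0 C0 u = pp \<gamma> (k * (A0 / k)) (k * c1) (k * w1)"
      using c1 C0pos k by (simp add: k_def u_def y_def)
    also have "\<dots> = k^3 * pp \<gamma> (A0 / k) c1 w1" by (rule pp_scale)
    also have "\<dots> \<ge> k^3 * pp \<gamma> a1 c1 w1"
    proof -
      have "a1 \<le> A0 / k" using r0' C0pos c1 by (simp add: k_def field_simps)
      then show ?thesis using k a1 w1 gamma by (intro mult_left_mono pp_mono_a) auto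
    qed
    finally have "pp \<gamma> A0 C0 u > 0" using pw k by (smt (verit) mult_pos_pos zero_less_power)
    from below_stable[OF smU smS storm_minus(3) Sst glt C0ge this] have uS: "u < vS" using SmE by simp
    have u0: "u > 0" using C0pos y by (simp add: u_def)
    have "mq < u / (u + C0)"
    proof -
      have "k * c1 = C0" using c1 by (simp add: k_def)
      then show ?thesis using mq1 frac_scale[of k w1 c1] k w1 c1 by (simp add: u_def y_def k_def)
    qed
    also have "\<dots> < vS / (vS + C0)" by (rule frac_lt[OF u0 uS C0pos])
    finally have mqS: "mq < mS" using mS by simp
    have bar: "v t > C t * y \<and> m t > mq" for t
    proof (rule barrier[OF dv dm Cam Ccont less_imp_le[OF y]])
      fix t assume "v t = C t * y" "mq \<le> m t"
      then show "F1 t > 0" unfolding F1_def y_def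
        using H1_II[OF gamma Apos[of t] Cpos[of t] a1 c1 fle[of t] less_imp_le[OF mq0] _ gq] by simp
    next
      fix t assume "m t = mq" "C t * y \<le> v t"
      then show "F2 t > 0" unfolding F2_def y_def
        using H2_II[OF Cpos[of t] c1 w1 less_imp_le[OF mq0] mq1] by simp
    next
      show "eventually (\<lambda>t. v t > C t * y \<and> m t > mq) at_bot"
        using H3_lemma[OF v_bot m_bot C_bot _ mqS] uS by (simp add: u_def)
    qed
    show False using final_contra[OF v_top _ Cam C_top Cppos y] bar by blast
  qed
qed

end
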